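(* Let $\Gamma=F_r$ ($r\ge2$) be free on $\{a,b,a_3,\dots,a_r\}$, and for $n\ge2$ let $u_n=a^nba^{-n}b^{-1}$ and $D_n=V_{u_n}\subseteq Y$. Let $n_1,n_2\ge2$ and let $t\in\Gamma$ be nontrivial with $tD_{n_2}\cap D_{n_1}\ne\emptyset$. Then one of the following holds: (1) $t$ ends with $u_{n_2}^{-1}=ba^{n_2}b^{-1}a^{-n_2}$; (2) $t$ starts with $u_{n_1}=a^{n_1}ba^{-n_1}b^{-1}$; (3) $n_2\ne n_1$ and $t=u_{n_1}u_{n_2}^{-1}=a^{n_1}ba^{n_2-n_1}b^{-1}a^{-n_2}$.
   Context: $Y$ is the Gromov boundary of $\Gamma$: infinite reduced words in the generators and their inverses, with $\Gamma$ acting by concatenation and cancellation. For nontrivial $s\in\Gamma$: $y\in Y$ starts with $s$ if $y=sy'$ with $y'\in Y$ and the last letter of the reduced word of $s$ is not the inverse of the first letter of $y'$; $V_s$ is the set of $y\in Y$ starting with $s$; $t\in\Gamma$ starts (resp. ends) with $s$ if the reduced word of $t$ begins (resp. ends) with the reduced word of $s$. *)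

theory Defs
  imports Main
begin

text \<open>Free group F_r on generators indexed 0..r-1 (0 = a, 1 = b, 2.. = a_3,...).
  A letter is (generator index, exponent sign): (i,True) = generator, (i,False) = its inverse.\<close>

type_synonym letter = "nat \<times> bool"

definition inv_letter :: "letter \<Rightarrow> letter" where
  "inv_letter l = (fst l, \<not> snd l)"

definition letters_ok :: "nat \<Rightarrow> letter set \<Rightarrow> bool" where
  "letters_ok r L \<longleftrightarrow> (\<forall>l\<in>L. fst l < r)"

definition reduced_word :: "letter list \<Rightarrow> bool" where
  "reduced_word xs \<longleftrightarrow> (\<forall>i. Suc i < length xs \<longrightarrow> xs ! Suc i \<noteq> inv_letter (xs ! i))"

definition in_Gamma :: "nat \<Rightarrow> letter list \<Rightarrow> bool" where
  "in_Gamma r xs \<longleftrightarrow> letters_ok r (set xs) \<and> reduced_word xs"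

text \<open>Gromov boundary Y: infinite reduced words.\<close>
definition in_Y :: "nat \<Rightarrow> (nat \<Rightarrow> letter) \<Rightarrow> bool" where
  "in_Y r y \<longleftrightarrow> letters_ok r (range y) \<and> (\<forall>i. y (Suc i) \<noteq> inv_letter (y i))"

definition cancel_cons :: "letter \<Rightarrow> letter list \<Rightarrow> letter list" where
  "cancel_cons l ys = (case ys of [] \<Rightarrow> [l] | y # ys' \<Rightarrow> if y = inv_letter l then ys' else l # ys)"

definition wmult :: "letter list \<Rightarrow> letter list \<Rightarrow> letter list" where
  "wmult xs ys = foldr cancel_cons xs ys"

definition winv :: "letter list \<Rightarrow> letter list" where
  "winv xs = rev (map inv_letter xs)"

definition act_letter :: "letter \<Rightarrow> (nat \<Rightarrow> letter) \<Rightarrow> (nat \<Rightarrow> letter)" where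
  "act_letter l y = (if y 0 = inv_letter l then (\<lambda>i. y (Suc i))
                     else (\<lambda>i. case i of 0 \<Rightarrow> l | Suc j \<Rightarrow> y j))"

definition act :: "letter list \<Rightarrow> (nat \<Rightarrow> letter) \<Rightarrow> (nat \<Rightarrow> letter)" where
  "act t y = foldr act_letter t y"

definition starts_with_Y :: "nat \<Rightarrow> (nat \<Rightarrow> letter) \<Rightarrow> letter list \<Rightarrow> bool" where
  "starts_with_Y r y s \<longleftrightarrow> (\<exists>y'. in_Y r y' \<and> last s \<noteq> inv_letter (y' 0) \<and>
      y = (\<lambda>i. if i < length s then s ! i else y' (i - length s)))"

definition V :: "nat \<Rightarrow> letter list \<Rightarrow> (nat \<Rightarrow> letter) set" where
  "V r s = {y. in_Y r y \<and> starts_with_Y r y s}"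

definition gen_a :: letter where "gen_a = (0, True)"
definition gen_b :: letter where "gen_b = (1, True)"

definition u :: "nat \<Rightarrow> letter list" where
  "u n = wmult (replicate n gen_a) (wmult [gen_b] (wmult (replicate n (inv_letter gen_a)) [inv_letter gen_b]))"

definition D :: "nat \<Rightarrow> nat \<Rightarrow> (nat \<Rightarrow> letter) set" where
  "D r n = V r (u n)"

definition starts_with :: "letter list \<Rightarrow> letter list \<Rightarrow> bool" where
  "starts_with t s \<longleftrightarrow> (\<exists>w. t = s @ w)"
definition ends_with :: "letter list \<Rightarrow> letter list \<Rightarrow> bool" where
  "ends_with t s \<longleftrightarrow> (\<exists>w. t = w @ s)"

end

theory Submission
  imports Defs
begin

definition pre :: "letter list \<Rightarrow> (nat \<Rightarrow> letter) \<Rightarrow> (nat \<Rightarrow> letter)" where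
  "pre xs z = (\<lambda>i. if i < length xs then xs ! i else z (i - length xs))"

lemma inv_inv[simp]: "inv_letter (inv_letter x) = x"
  by (simp add: inv_letter_def)
lemma inv_neq[simp]: "inv_letter x \<noteq> x" "x \<noteq> inv_letter x"
  by (auto simp: inv_letter_def prod_eq_iff)

lemma winv_simps[simp]: "winv [] = []" "winv (x # xs) = winv xs @ [inv_letter x]"
  "winv (xs @ ys) = winv ys @ winv xs" "winv (winv xs) = xs" "length (winv xs) = length xs"
  by (auto simp: winv_def rev_map o_def)

lemma reduced_Cons: "reduced_word (x # xs) \<longleftrightarrow> reduced_word xs \<and> (xs \<noteq> [] \<longrightarrow> hd xs \<noteq> inv_letter x)"
proof
  assume a: "reduced_word (x # xs)"
  have "reduced_word xs" unfolding reduced_word_def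
  proof (intro allI impI)
    fix i assume "Suc i < length xs"
    then show "xs ! Suc i \<noteq> inv_letter (xs ! i)"
      using a[unfolded reduced_word_def, rule_format, of "Suc i"] by simp
  qed
  moreover have "xs \<noteq> [] \<longrightarrow> hd xs \<noteq> inv_letter x"
    using a[unfolded reduced_word_def, rule_format, of 0] by (cases xs) auto
  ultimately show "reduced_word xs \<and> (xs \<noteq> [] \<longrightarrow> hd xs \<noteq> inv_letter x)" by simp
next
  assume a: "reduced_word xs \<and> (xs \<noteq> [] \<longrightarrow> hd xs \<noteq> inv_letter x)"
  show "reduced_word (x # xs)" unfolding reduced_word_def
  proof (intro allI impI)
    fix i assume i: "Suc i < length (x # xs)"
    show "(x # xs) ! Suc i \<noteq> inv_letter ((x # xs) ! i)"
    proof (cases i)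
      case 0 then show ?thesis using a i by (cases xs) auto
    next
      case (Suc j) then show ?thesis using a i by (simp add: reduced_word_def)
    qed
  qed
qed

lemma wmult_Cons[simp]: "wmult (x # xs) ys = cancel_cons x (wmult xs ys)"
  by (simp add: wmult_def)
lemma wmult_Nil[simp]: "wmult [] ys = ys"
  by (simp add: wmult_def)
lemma wmult_append: "wmult (xs @ ys) zs = wmult xs (wmult ys zs)"
  by (simp add: wmult_def)

lemma wmult_red: "reduced_word (xs @ ys) \<Longrightarrow> wmult xs ys = xs @ ys"
proof (induction xs)
  case Nil then show ?case by simp
next
  case (Cons x xs)
  then have r: "reduced_word (xs @ ys)" and h: "xs @ ys \<noteq> [] \<longrightarrow> hd (xs @ ys) \<noteq> inv_letter x"
    by (simp_all add: reduced_Cons)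
  show ?case using Cons.IH[OF r] h
    by (cases "xs @ ys") (auto simp: cancel_cons_def)
qed

lemma wmult_cancel: "wmult d (winv d @ z) = z"
proof (induction d arbitrary: z)
  case Nil then show ?case by simp
next
  case (Cons x d)
  have "wmult (x # d) (winv (x # d) @ z) = cancel_cons x (wmult d (winv d @ (inv_letter x # z)))"
    by simp
  also have "\<dots> = z" using Cons.IH by (simp add: cancel_cons_def)
  finally show ?case .
qed

lemma wmult_rep: "ys = [] \<or> hd ys \<noteq> inv_letter x \<Longrightarrow> wmult (replicate n x) ys = replicate n x @ ys"
proof (induction n)
  case 0 then show ?case by simp
next
  case (Suc n)
  then have "wmult (replicate (Suc n) x) ys = cancel_cons x (replicate n x @ ys)" by simp
  also have "\<dots> = replicate (Suc n) x @ ys" using Suc.prems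
    by (cases n; cases ys) (auto simp: cancel_cons_def)
  finally show ?case .
qed

definition "ga' = inv_letter gen_a"
definition "gb' = inv_letter gen_b"

lemma u_eq: "n \<ge> 1 \<Longrightarrow> u n = (replicate n gen_a @ gen_b # replicate n ga') @ [gb']"
proof -
  assume n: "n \<ge> 1"
  have ne: "gen_a \<noteq> gen_b" "inv_letter gen_a \<noteq> gen_b" "gen_a \<noteq> inv_letter gen_b"
    "inv_letter gen_a \<noteq> inv_letter gen_b"
    by (auto simp: inv_letter_def gen_a_def gen_b_def)
  have 1: "wmult (replicate n ga') [gb'] = replicate n ga' @ [gb']"
    using ne by (intro wmult_rep) (simp add: ga'_def gb'_def)
  have 2: "wmult [gen_b] (replicate n ga' @ [gb']) = gen_b # replicate n ga' @ [gb']"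
    using n ne by (cases n) (auto simp: cancel_cons_def ga'_def gb'_def)
  have 3: "wmult (replicate n gen_a) (gen_b # replicate n ga' @ [gb']) = replicate n gen_a @ gen_b # replicate n ga' @ [gb']"
    using ne by (intro wmult_rep) simp
  show ?thesis unfolding u_def using 1 2 3 by (simp add: ga'_def gb'_def)
qed

lemma gb'_notin: "gb' \<notin> set (replicate n gen_a @ gen_b # replicate n ga')"
  by (auto simp: ga'_def gb'_def gen_a_def gen_b_def inv_letter_def)


lemma pre_Nil[simp]: "pre [] f = f" by (simp add: pre_def)

lemma pre_Cons: "pre (x # p) f = (\<lambda>i. case i of 0 \<Rightarrow> x | Suc j \<Rightarrow> pre p f j)"
  by (rule ext) (auto simp: pre_def split: nat.split)

lemma act_Cons[simp]: "act (x # t) y = act_letter x (act t y)" by (simp add: act_def)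
lemma act_Nil[simp]: "act [] y = y" by (simp add: act_def)

lemma act_decomp: "reduced_word t \<Longrightarrow> \<exists>p s. t = p @ s \<and> (\<forall>i<length s. y i = winv s ! i) \<and>
   act t y = pre p (\<lambda>i. y (i + length s)) \<and> (p \<noteq> [] \<longrightarrow> y (length s) \<noteq> inv_letter (last p))"
proof (induction t)
  case Nil show ?case by (rule exI[of _ "[]"], rule exI[of _ "[]"]) simp
next
  case (Cons x t)
  from Cons.prems have rt: "reduced_word t" and ht: "t \<noteq> [] \<longrightarrow> hd t \<noteq> inv_letter x"
    by (simp_all add: reduced_Cons)
  from Cons.IH[OF rt] obtain p s where t: "t = p @ s" and s: "\<forall>i<length s. y i = winv s ! i"
    and a: "act t y = pre p (\<lambda>i. y (i + length s))"
    and c: "p \<noteq> [] \<longrightarrow> y (length s) \<noteq> inv_letter (last p)" by blast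
  show ?case
  proof (cases "p = []")
    case False
    have "act t y 0 = hd p" using False a by (cases p) (auto simp: pre_def)
    then have "act t y 0 \<noteq> inv_letter x" using ht t False by auto
    then have "act (x # t) y = pre (x # p) (\<lambda>i. y (i + length s))"
      by (simp add: act_letter_def a pre_Cons)
    then show ?thesis using t s c False by (intro exI[of _ "x # p"] exI[of _ s]) auto
  next
    case True
    show ?thesis
    proof (cases "y (length s) = inv_letter x")
      case yes: True
      have "act (x # t) y = (\<lambda>i. y (i + length (x # s)))"
        using True yes a by (simp add: act_letter_def)
      moreover have "\<forall>i<length (x # s). y i = winv (x # s) ! i"
        using s yes by (auto simp: nth_append less_Suc_eq)
      ultimately show ?thesis using t True by (intro exI[of _ "[]"] exI[of _ "x # s"]) auto
    next
      case no: False
      have "act (x # t) y = pre [x] (\<lambda>i. y (i + length s))"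
        using True no a by (auto simp: act_letter_def pre_def split: nat.split)
      then show ?thesis using t s True no by (intro exI[of _ "[x]"] exI[of _ s]) auto
    qed
  qed
qed

lemma key: assumes e: "pre (V2 @ [c]) f = pre (V1 @ [c]) g" and n1: "c \<notin> set V1" and n2: "c \<notin> set V2"
  shows "V2 = V1"
proof -
  have l: "length V2 = length V1"
  proof (rule ccontr)
    assume "length V2 \<noteq> length V1"
    then consider "length V2 < length V1" | "length V1 < length V2" by linarith
    then show False
    proof cases
      case 1
      have "pre (V2 @ [c]) f (length V2) = c" by (simp add: pre_def)
      moreover have "pre (V1 @ [c]) g (length V2) = V1 ! length V2" using 1 by (simp add: pre_def nth_append)
      ultimately show False using e 1 n1 nth_mem by metis
    next
      case 2
      have "pre (V1 @ [c]) g (length V1) = c" by (simp add: pre_def)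
      moreover have "pre (V2 @ [c]) f (length V1) = V2 ! length V1" using 2 by (simp add: pre_def nth_append)
      ultimately show False using e 2 n2 nth_mem by metis
    qed
  qed
  show ?thesis
  proof (rule nth_equalityI[OF l])
    fix i assume i: "i < length V2"
    have "pre (V2 @ [c]) f i = pre (V1 @ [c]) g i" using e by simp
    then show "V2 ! i = V1 ! i" using i l by (simp add: pre_def nth_append)
  qed
qed


lemma red_junction: assumes "reduced_word (xs @ ys)" "xs \<noteq> []" "ys \<noteq> []"
  shows "hd ys \<noteq> inv_letter (last xs)"
proof -
  have "Suc (length xs - 1) < length (xs @ ys)" using assms by simp
  then have "(xs @ ys) ! Suc (length xs - 1) \<noteq> inv_letter ((xs @ ys) ! (length xs - 1))"
    using assms(1) by (simp add: reduced_word_def)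
  moreover have "Suc (length xs - 1) = length xs" using assms by simp
  ultimately show ?thesis using assms by (simp add: nth_append hd_conv_nth last_conv_nth)
qed

lemma last_winv: "s \<noteq> [] \<Longrightarrow> last (winv s) = inv_letter (hd s)"
  by (simp add: winv_def last_rev hd_map)

lemma in_D: assumes "y \<in> D r n" "n \<ge> 1"
  shows "\<exists>y2. y = pre (u n) y2"
  using assms unfolding D_def V_def starts_with_Y_def pre_def by blast

theorem lemma5p7:
  fixes r n1 n2 :: nat and t :: "letter list"
  assumes "r \<ge> 2" and "n1 \<ge> 2" and "n2 \<ge> 2"
    and "in_Gamma r t" and "t \<noteq> []"
    and "\<exists>y\<in>D r n2. act t y \<in> D r n1"
  shows "ends_with t (winv (u n2)) \<or> starts_with t (u n1) \<or>
         (n2 \<noteq> n1 \<and> t = wmult (u n1) (winv (u n2)))"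
proof -
  define W1 where "W1 = replicate n1 gen_a @ gen_b # replicate n1 ga'"
  define W2 where "W2 = replicate n2 gen_a @ gen_b # replicate n2 ga'"
  define U1 where "U1 = W1 @ [gb']"
  define U2 where "U2 = W2 @ [gb']"
  have U1: "u n1 = U1" using assms(2) u_eq unfolding U1_def W1_def by simp
  have U2: "u n2 = U2" using assms(3) u_eq unfolding U2_def W2_def by simp
  have nW1: "gb' \<notin> set W1" unfolding W1_def by (rule gb'_notin)
  have nW2: "gb' \<notin> set W2" unfolding W2_def by (rule gb'_notin)
  obtain y where yD: "y \<in> D r n2" and tyD: "act t y \<in> D r n1" using assms(6) by blast
  obtain y2 where y: "y = pre U2 y2" using in_D[OF yD] assms(3) U2 by auto
  obtain w where ty: "act t y = pre U1 w" using in_D[OF tyD] assms(2) U1 by auto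
  have rt: "reduced_word t" using assms(4) by (simp add: in_Gamma_def)
  obtain p s where t: "t = p @ s" and s: "\<forall>i<length s. y i = winv s ! i"
    and a: "act t y = pre p (\<lambda>i. y (i + length s))"
    using act_decomp[OF rt] by blast
  define k where "k = length s"
  show ?thesis
  proof (cases "k \<ge> length U2")
    case True
    have "take (length U2) (winv s) = U2"
    proof (rule nth_equalityI)
      show "length (take (length U2) (winv s)) = length U2" using True k_def by simp
    next
      fix i assume "i < length (take (length U2) (winv s))"
      then have i: "i < length U2" "i < length s" by auto
      then have "take (length U2) (winv s) ! i = y i" using s by simp
      also have "\<dots> = U2 ! i" using i y by (simp add: pre_def)
      finally show "take (length U2) (winv s) ! i = U2 ! i" .
    qed
    then have "winv s = U2 @ drop (length U2) (winv s)" by (metis append_take_drop_id)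
    then have "winv (winv s) = winv (drop (length U2) (winv s)) @ winv U2" by (metis winv_simps(3))
    then have "t = (p @ winv (drop (length U2) (winv s))) @ winv U2" using t by simp
    then show ?thesis unfolding ends_with_def U2 by blast
  next
    case kU2: False
    have hp: "p ! i = U1 ! i" if "i < length p" "i < length U1" for i
    proof -
      have "p ! i = act t y i" using a that by (simp add: pre_def)
      also have "\<dots> = U1 ! i" using ty that by (simp add: pre_def)
      finally show ?thesis .
    qed
    show ?thesis
    proof (cases "length p \<ge> length U1")
      case True
      have "take (length U1) p = U1" using True hp by (intro nth_equalityI) auto
      then have "t = U1 @ (drop (length U1) p @ s)" using t by (metis append_take_drop_id append.assoc)
      then show ?thesis unfolding starts_with_def U1 by blast
    next
      case pU1: False
      have p1: "p = take (length p) W1"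
        using pU1 hp by (intro nth_equalityI) (auto simp: U1_def nth_append)
      have ws: "winv s = take k U2"
        using kU2 s y by (intro nth_equalityI) (auto simp: k_def pre_def)
      have "act t y = pre (p @ drop k U2) y2"
      proof
        fix i
        have act_i: "act t y i = pre p (\<lambda>i. pre U2 y2 (i + k)) i" using a y k_def by simp
        then show "act t y i = pre (p @ drop k U2) y2 i"
          
        proof (cases "i < length p")
          case True then show ?thesis using act_i by (simp add: pre_def nth_append)
        next
          case False
          define j where "j = i - length p"
          have i: "i = length p + j" using False j_def by simp
          have l: "act t y i = pre U2 y2 (j + k)" using act_i False i by (simp add: pre_def)
          show ?thesis
          proof (cases "j + k < length U2")
            case True then show ?thesis using l i kU2 by (auto simp: pre_def nth_append add.commute[of k j])
          next
            case False
            have len: "length (p @ drop k U2) = length p + (length U2 - k)" by simp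
            have n0: "\<not> length p + j < length p + (length U2 - k)" using False kU2 by simp
            have n: "\<not> i < length (p @ drop k U2)" using n0 by (simp only: len i not_False_eq_True)
            have e0: "length p + j - (length p + (length U2 - k)) = j + k - length U2" using False kU2 by simp
            have e: "i - length (p @ drop k U2) = j + k - length U2" unfolding len by (subst i, rule e0)
            have "pre (p @ drop k U2) y2 i = y2 (j + k - length U2)"
              using n e unfolding pre_def by (simp only: if_False)
            moreover have "pre U2 y2 (j + k) = y2 (j + k - length U2)"
              using False unfolding pre_def by (simp only: if_False)
            ultimately show ?thesis using l by simp
          qed
        qed
      qed
      moreover have "p @ drop k U2 = (p @ drop k W2) @ [gb']" using kU2 by (simp add: U2_def)
      ultimately have "pre ((p @ drop k W2) @ [gb']) y2 = pre (W1 @ [gb']) w" using ty U1_def by simp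
      moreover have "gb' \<notin> set (p @ drop k W2)"
        using nW1 nW2 p1 set_take_subset set_drop_subset by (metis Un_iff in_mono set_append)
      ultimately have pW: "p @ drop k W2 = W1" using key nW1 by blast
      define d where "d = drop k U2"
      have U1d: "U1 = p @ d" using pW kU2 by (simp add: U1_def U2_def d_def)
      have U2d: "U2 = winv s @ d" using ws by (simp add: d_def)
      have "wmult U1 (winv U2) = wmult p (wmult d (winv d @ s))"
        by (simp add: U1d U2d wmult_append)
      also have "\<dots> = t" using wmult_red rt t by (simp add: wmult_cancel)
      finally have teq: "t = wmult U1 (winv U2)" by simp
      have "n2 \<noteq> n1"
      proof
        assume "n2 = n1"
        then have "U1 = U2" using U1 U2 by simp
        then have "length p = k" using U1d U2d k_def by simp
        then have "winv s = take (length p) W1" using ws \<open>U1 = U2\<close> pU1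
          by (metis U1_def take_append diff_is_0_eq less_Suc_eq_le length_append_singleton not_le take0 append_Nil2)
        then have "p = winv s" using p1 by simp
        then have tt: "t = winv s @ s" using t by simp
        have sne: "s \<noteq> []" using tt assms(5) by auto
        have "winv s \<noteq> []" using sne by (simp add: winv_def)
        then have "hd s \<noteq> inv_letter (last (winv s))" using red_junction[of "winv s" s] sne rt tt by auto
        then show False using last_winv[OF sne] by simp
      qed
      then show ?thesis using teq U1 U2 by simp
    qed
  qed
qed

end
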